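(* Let $\mathbb F$ be an algebraically closed field and $\lambda\in\overline{\mathbb F}$. (1) If $C(s)\in\mathbb F[s]^{p_1\times q_1}$, $D(s)\in\mathbb F[s]^{p_2\times q_2}$ are pencils and $A(s)=\begin{bmatrix}C(s)&0\\0&D(s)\end{bmatrix}$, then $\dim\mathcal L^i_\lambda(A(s))=\dim\mathcal L^i_\lambda(C(s))+\dim\mathcal L^i_\lambda(D(s))$ for all $i\ge0$. (2) If $C(s)\in\mathbb F[s]^{p\times q_1}$ and $A(s)=\begin{bmatrix}C(s)&0\end{bmatrix}\in\mathbb F[s]^{p\times(q_1+q_2)}$, then $\dim\mathcal L^i_\lambda(A(s))=\dim\mathcal L^i_\lambda(C(s))+q_2$ for all $i\ge1$. (3) If $C(s)\in\mathbb F[s]^{p_1\times q}$ and $A(s)=\begin{bmatrix}C(s)\\0\end{bmatrix}\in\mathbb F[s]^{(p_1+p_2)\times q}$, then $\dim\mathcal L^i_\lambda(A(s))=\dim\mathcal L^i_\lambda(C(s))$ for all $i\ge0$.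
   Context: A pencil is $A(s)=A_0+sA_1$ with constant matrices $A_0,A_1$; $A(\infty):=A_1$, $\overline{\mathbb F}=\mathbb F\cup\{\infty\}$. A Jordan chain at $\lambda$ of length $k+1$ is $(x_k,\dots,x_0)$ of column vectors (of size the number of columns), $x_0\ne0$, with $A(\lambda)x_0=0$, $A(\lambda)x_i=-A_1x_{i-1}$ ($1\le i\le k$) if $\lambda\in\mathbb F$, and $A_1x_0=0$, $A_1x_i=-A_0x_{i-1}$ if $\lambda=\infty$. $\mathcal L^\ell_\lambda(A(s))$ ($\ell\ge1$) is the span of the vectors of all Jordan chains at $\lambda$ of length $\le\ell$ (and $\{0\}$ if there are none), $\mathcal L^0_\lambda(A(s))=\{0\}$. *)

theory Defs
  imports "Jordan_Normal_Form.VS_Connect" "HOL-Computational_Algebra.Polynomial"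
begin

datatype 'a ext_pt = Fin 'a | Infty

text \<open>A pencil A(s) = A0 + s A1 is represented by the pair of constant matrices (A0, A1),
  both of the same dimension p x q.  A Jordan chain (x_k, ..., x_0) is represented
  by the list xs with xs ! i = x_i.\<close>
definition jordan_chain ::
  "'a::field mat \<Rightarrow> 'a mat \<Rightarrow> 'a ext_pt \<Rightarrow> 'a vec list \<Rightarrow> bool" where
  "jordan_chain A0 A1 lam xs \<longleftrightarrow>
     xs \<noteq> [] \<and> set xs \<subseteq> carrier_vec (dim_col A0) \<and> xs ! 0 \<noteq> 0\<^sub>v (dim_col A0) \<and>
     (case lam of
        Fin l \<Rightarrow> (A0 + l \<cdot>\<^sub>m A1) *\<^sub>v (xs ! 0) = 0\<^sub>v (dim_row A0) \<and>
                 (\<forall>i. 1 \<le> i \<and> i < length xs \<longrightarrow>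
                      (A0 + l \<cdot>\<^sub>m A1) *\<^sub>v (xs ! i) = - (A1 *\<^sub>v (xs ! (i - 1))))
      | Infty \<Rightarrow> A1 *\<^sub>v (xs ! 0) = 0\<^sub>v (dim_row A0) \<and>
                 (\<forall>i. 1 \<le> i \<and> i < length xs \<longrightarrow>
                      A1 *\<^sub>v (xs ! i) = - (A0 *\<^sub>v (xs ! (i - 1)))))"

definition jordan_space ::
  "nat \<Rightarrow> 'a::field mat \<Rightarrow> 'a mat \<Rightarrow> 'a ext_pt \<Rightarrow> 'a vec set" where
  "jordan_space l A0 A1 lam =
     (if l = 0 then {0\<^sub>v (dim_col A0)}
      else LinearCombinations.module.span class_ring (module_vec TYPE('a) (dim_col A0))
             {v. \<exists>xs. jordan_chain A0 A1 lam xs \<and> length xs \<le> l \<and> v \<in> set xs})"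

definition subspace_dim :: "nat \<Rightarrow> 'a::field vec set \<Rightarrow> nat" where
  "subspace_dim n W = vectorspace.dim class_ring ((module_vec TYPE('a) n)\<lparr>carrier := W\<rparr>)"

end

theory Submission
  imports Defs
begin

lemma sub_fin_dim:
  fixes W :: "'a::field vec set"
  assumes sub: "subspace class_ring W (module_vec TYPE('a) n)"
  shows "vectorspace.fin_dim class_ring ((module_vec TYPE('a) n)\<lparr>carrier := W\<rparr>)"
proof -
  interpret V: vec_space "TYPE('a)" n .
  interpret S: vectorspace class_ring "V.vs W" using V.subspace_is_vs sub by blast
  have smod: "submodule class_ring W V.V" using sub unfolding subspace_def by auto
  have Wc: "W \<subseteq> carrier_vec n" using smod unfolding submodule_def by auto
  define P where "P = (\<lambda>S. S \<subseteq> carrier (V.vs W) \<and> S.lin_indpt S)"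
  have bound: "finite A \<and> card A \<le> n" if "P A" for A
  proof -
    have AW: "A \<subseteq> W" using that unfolding P_def by auto
    have "V.lin_indpt A" using that V.span_li_not_depend(2)[OF AW smod] unfolding P_def by auto
    moreover have "A \<subseteq> carrier_vec n" using AW Wc by auto
    ultimately show ?thesis using V.li_le_dim[of A] V.dim_is_n by auto
  qed
  have P0: "P {}" unfolding P_def S.lin_dep_def by auto
  obtain A where A: "finite A" "maximal A P" using maximal_exists[of P n, OF bound P0] by blast
  have "S.gen_set A" using S.max_li_is_gen A(2) unfolding P_def by auto
  moreover have "A \<subseteq> carrier (V.vs W)" using A(2) unfolding maximal_def P_def by auto
  ultimately show ?thesis unfolding S.fin_dim_def using A(1) by blast
qed


lemma zero_append_vec: "0\<^sub>v n1 @\<^sub>v 0\<^sub>v n2 = (0\<^sub>v (n1+n2) :: 'a::zero vec)"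
  by (rule eq_vecI, auto)

lemma smult_append_vec: "(c::'a::semiring_1) \<cdot>\<^sub>v (u @\<^sub>v w) = (c \<cdot>\<^sub>v u) @\<^sub>v (c \<cdot>\<^sub>v w)"
  by (rule eq_vecI, auto simp: append_vec_def Let_def)

lemma neg_append_vec: "- (u @\<^sub>v w) = (- u) @\<^sub>v (- (w::'a::ab_group_add vec))"
  by (rule eq_vecI, auto simp: append_vec_def Let_def)

lemma vec_first_append: "u \<in> carrier_vec n1 \<Longrightarrow> vec_first (u @\<^sub>v w) n1 = u"
  by (rule eq_vecI, auto simp: vec_first_def)

lemma vec_last_append: "w \<in> carrier_vec n2 \<Longrightarrow> vec_last (u @\<^sub>v w) n2 = w"
  by (rule eq_vecI, auto simp: vec_last_def)

definition prodsp :: "nat \<Rightarrow> 'a vec set \<Rightarrow> 'a vec set \<Rightarrow> 'a vec set" where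
  "prodsp n1 W1 W2 = {u @\<^sub>v w | u w. u \<in> W1 \<and> w \<in> W2}"

lemma submodule_vecI:
  fixes W :: "'a::field vec set"
  assumes "W \<subseteq> carrier_vec n" "0\<^sub>v n \<in> W" "\<And>u w. u \<in> W \<Longrightarrow> w \<in> W \<Longrightarrow> u + w \<in> W"
    "\<And>c u. u \<in> W \<Longrightarrow> c \<cdot>\<^sub>v u \<in> W"
  shows "subspace class_ring W (module_vec TYPE('a) n)"
  unfolding subspace_def submodule_def using assms vec_vs[of n] vec_module[of n]
  by (auto simp: module_vec_simps)

lemma subspace_vecD:
  fixes W :: "'a::field vec set"
  assumes "subspace class_ring W (module_vec TYPE('a) n)"
  shows "W \<subseteq> carrier_vec n" "0\<^sub>v n \<in> W" "\<And>u w. u \<in> W \<Longrightarrow> w \<in> W \<Longrightarrow> u + w \<in> W"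
    "\<And>c u. u \<in> W \<Longrightarrow> c \<cdot>\<^sub>v u \<in> W"
  using assms unfolding subspace_def submodule_def
  by (auto simp: module_vec_simps)

lemma prodsp_subspace:
  fixes W1 :: "'a::field vec set"
  assumes 1: "subspace class_ring W1 (module_vec TYPE('a) n1)"
    and 2: "subspace class_ring W2 (module_vec TYPE('a) n2)"
  shows "subspace class_ring (prodsp n1 W1 W2) (module_vec TYPE('a) (n1+n2))"
proof (rule submodule_vecI)
  note a = subspace_vecD[OF 1] and b = subspace_vecD[OF 2]
  show "prodsp n1 W1 W2 \<subseteq> carrier_vec (n1 + n2)" using a(1) b(1) unfolding prodsp_def by auto
  show "0\<^sub>v (n1 + n2) \<in> prodsp n1 W1 W2" unfolding prodsp_def
    using a(2) b(2) zero_append_vec[of n1 n2, where 'a='a, symmetric] by blast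
  show "u + w \<in> prodsp n1 W1 W2" if "u \<in> prodsp n1 W1 W2" "w \<in> prodsp n1 W1 W2" for u w
  proof -
    from that obtain u1 u2 w1 w2 where "u = u1 @\<^sub>v u2" "w = w1 @\<^sub>v w2" "u1 \<in> W1" "u2 \<in> W2" "w1 \<in> W1" "w2 \<in> W2"
      unfolding prodsp_def by auto
    then show ?thesis unfolding prodsp_def using append_vec_add[of u1 n1 w1 u2 n2 w2] a b by blast
  qed
  show "c \<cdot>\<^sub>v u \<in> prodsp n1 W1 W2" if "u \<in> prodsp n1 W1 W2" for c u
  proof -
    from that obtain u1 u2 where "u = u1 @\<^sub>v u2" "u1 \<in> W1" "u2 \<in> W2"
      unfolding prodsp_def by auto
    then show ?thesis unfolding prodsp_def using a(4) b(4) smult_append_vec by blast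
  qed
qed

lemma dim_prodsp:
  fixes W1 :: "'a::field vec set"
  assumes 1: "subspace class_ring W1 (module_vec TYPE('a) n1)"
    and 2: "subspace class_ring W2 (module_vec TYPE('a) n2)"
  shows "subspace_dim (n1+n2) (prodsp n1 W1 W2) = subspace_dim n1 W1 + subspace_dim n2 W2"
proof -
  note a = subspace_vecD[OF 1] and b = subspace_vecD[OF 2]
  define W where "W = prodsp n1 W1 W2"
  define K where "K = prodsp n1 {0\<^sub>v n1} W2"
  have z: "subspace class_ring {0\<^sub>v n1} (module_vec TYPE('a) n1)"
    by (rule submodule_vecI, auto)
  have Wsub: "subspace class_ring W (module_vec TYPE('a) (n1+n2))" unfolding W_def by (rule prodsp_subspace[OF 1 2])
  have Ksub: "subspace class_ring K (module_vec TYPE('a) (n1+n2))" unfolding K_def by (rule prodsp_subspace[OF z 2])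
  interpret V: vec_space "TYPE('a)" "n1+n2" .
  interpret V1: vec_space "TYPE('a)" "n1" .
  interpret V2: vec_space "TYPE('a)" "n2" .
  interpret SW: vectorspace class_ring "V.vs W" using V.subspace_is_vs Wsub by blast
  interpret SW1: vectorspace class_ring "V1.vs W1" using V1.subspace_is_vs 1 by blast
  interpret SW2: vectorspace class_ring "V2.vs W2" using V2.subspace_is_vs 2 by blast
  interpret SK: vectorspace class_ring "V.vs K" using V.subspace_is_vs Ksub by blast
  define T where "T = (\<lambda>x::'a vec. vec_first x n1)"
  have lmT: "linear_map class_ring (V.vs W) (V1.vs W1) T"
  proof (unfold_locales)
    show "T \<in> LinearCombinations.module_hom class_ring (V.vs W) (V1.vs W1)"
      unfolding LinearCombinations.module_hom_def
    proof (auto simp: module_vec_simps)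
      fix x assume "x \<in> W"
      then show "T x \<in> W1" unfolding W_def prodsp_def T_def using a(1) by (auto simp: vec_first_append)
    next
      fix x y assume "x \<in> W" "y \<in> W"
      then obtain u w ua wa where *: "x = u @\<^sub>v w" "y = ua @\<^sub>v wa" "u \<in> W1" "w \<in> W2" "ua \<in> W1" "wa \<in> W2"
        unfolding W_def prodsp_def by auto
      then have c: "u \<in> carrier_vec n1" "ua \<in> carrier_vec n1" "w \<in> carrier_vec n2" "wa \<in> carrier_vec n2"
        using a(1) b(1) by auto
      have "x + y = (u + ua) @\<^sub>v (w + wa)" unfolding *(1,2) by (rule append_vec_add[OF c(1,2) c(3,4)])
      then show "T (x + y) = T x + T y" unfolding T_def *(1,2) using c
        by (simp add: vec_first_append)
    next
      fix c x assume "x \<in> W"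
      then show "T (c \<cdot>\<^sub>v x) = c \<cdot>\<^sub>v T x" unfolding W_def prodsp_def T_def using a(1) b(1)
        by (auto simp: vec_first_append smult_append_vec)
    qed
  qed
  interpret LT: linear_map class_ring "V.vs W" "V1.vs W1" T by (rule lmT)
  have im: "LT.imT = W1"
  proof -
    have "T ` W = W1"
    proof
      show "T ` W \<subseteq> W1" unfolding W_def prodsp_def T_def using a(1) by (auto simp: vec_first_append)
      show "W1 \<subseteq> T ` W"
      proof
        fix u assume u: "u \<in> W1"
        then have "u @\<^sub>v 0\<^sub>v n2 \<in> W" unfolding W_def prodsp_def using b(2) by blast
        moreover have "T (u @\<^sub>v 0\<^sub>v n2) = u" unfolding T_def using u a(1) by (auto simp: vec_first_append)
        ultimately show "u \<in> T ` W" by (metis image_eqI)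
      qed
    qed
    then show ?thesis unfolding LT.im_def by simp
  qed
  have ker: "LT.kerT = K"
  proof -
    have "{v \<in> W. T v = 0\<^sub>v n1} = K"
    proof
      show "{v \<in> W. T v = 0\<^sub>v n1} \<subseteq> K"
      proof
        fix v assume "v \<in> {v \<in> W. T v = 0\<^sub>v n1}"
        then obtain u w where *: "v = u @\<^sub>v w" "u \<in> W1" "w \<in> W2" "T v = 0\<^sub>v n1"
          unfolding W_def prodsp_def by auto
        then have "u = 0\<^sub>v n1" unfolding T_def using a(1) by (auto simp: vec_first_append)
        then show "v \<in> K" unfolding K_def prodsp_def using * by blast
      qed
      show "K \<subseteq> {v \<in> W. T v = 0\<^sub>v n1}"
      proof
        fix v assume "v \<in> K"
        then obtain w where *: "v = 0\<^sub>v n1 @\<^sub>v w" "w \<in> W2" unfolding K_def prodsp_def by auto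
        then have "v \<in> W" unfolding W_def prodsp_def using a(2) by blast
        moreover have "T v = 0\<^sub>v n1" unfolding T_def *(1) by (simp add: vec_first_append)
        ultimately show "v \<in> {v \<in> W. T v = 0\<^sub>v n1}" by simp
      qed
    qed
    then show ?thesis unfolding LT.ker_def by (simp add: module_vec_simps)
  qed
  have rn: "vectorspace.dim class_ring ((V1.vs W1)\<lparr>carrier := LT.imT\<rparr>) + vectorspace.dim class_ring ((V.vs W)\<lparr>carrier := LT.kerT\<rparr>) = SW.dim"
    by (rule LT.rank_nullity, rule sub_fin_dim[OF Wsub])
  have dK: "SK.dim = SW2.dim"
  proof -
    define S where "S = (\<lambda>x::'a vec. vec_last x n2)"
    have Sapp: "S (0\<^sub>v n1 @\<^sub>v w) = w" if "w \<in> W2" for w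
      unfolding S_def using that b(1) by (auto simp: vec_last_append)
    have lmS: "linear_map class_ring (V.vs K) (V2.vs W2) S"
    proof (unfold_locales)
      show "S \<in> LinearCombinations.module_hom class_ring (V.vs K) (V2.vs W2)"
        unfolding LinearCombinations.module_hom_def
      proof (auto simp: module_vec_simps)
        fix x assume "x \<in> K"
        then show "S x \<in> W2" unfolding K_def prodsp_def using Sapp by auto
      next
        fix x y assume "x \<in> K" "y \<in> K"
        then obtain w wa where *: "x = 0\<^sub>v n1 @\<^sub>v w" "y = 0\<^sub>v n1 @\<^sub>v wa" "w \<in> W2" "wa \<in> W2"
          unfolding K_def prodsp_def by auto
        then have c: "w \<in> carrier_vec n2" "wa \<in> carrier_vec n2" using b(1) by auto
        have "x + y = (0\<^sub>v n1 + 0\<^sub>v n1) @\<^sub>v (w + wa)" unfolding *(1,2)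
          by (rule append_vec_add[OF _ _ c], auto)
        then show "S (x + y) = S x + S y" unfolding S_def *(1,2) using c
          by (simp add: vec_last_append)
      next
        fix c x assume "x \<in> K"
        then obtain w where *: "x = 0\<^sub>v n1 @\<^sub>v w" "w \<in> W2"
          unfolding K_def prodsp_def by auto
        then show "S (c \<cdot>\<^sub>v x) = c \<cdot>\<^sub>v S x" unfolding S_def using b(1)
          by (auto simp: vec_last_append smult_append_vec)
      qed
    qed
    interpret LS: linear_map class_ring "V.vs K" "V2.vs W2" S by (rule lmS)
    have inj: "inj_on S (carrier (V.vs K))"
    proof (rule inj_onI)
      fix x y assume "x \<in> carrier (V.vs K)" "y \<in> carrier (V.vs K)" "S x = S y"
      then obtain w wa where "x = 0\<^sub>v n1 @\<^sub>v w" "y = 0\<^sub>v n1 @\<^sub>v wa" "w \<in> W2" "wa \<in> W2" "S x = S y"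
        unfolding K_def prodsp_def by auto
      then show "x = y" using Sapp by simp
    qed
    have surj: "S ` (carrier (V.vs K)) = carrier (V2.vs W2)"
    proof -
      have "S ` K = W2"
      proof
        show "S ` K \<subseteq> W2" unfolding K_def prodsp_def using Sapp by auto
        show "W2 \<subseteq> S ` K"
        proof
          fix w assume w: "w \<in> W2"
          then have "0\<^sub>v n1 @\<^sub>v w \<in> K" unfolding K_def prodsp_def by blast
          then show "w \<in> S ` K" using Sapp[OF w] by (metis image_eqI)
        qed
      qed
      then show ?thesis by simp
    qed
    show ?thesis by (rule LS.dim_eq[OF sub_fin_dim[OF Ksub] inj surj])
  qed
  have "SW1.dim + SK.dim = SW.dim" using rn by (simp add: im ker)
  then show ?thesis using dK unfolding subspace_dim_def W_def by simp
qed


definition pN :: "'a::field mat \<Rightarrow> 'a mat \<Rightarrow> 'a ext_pt \<Rightarrow> 'a mat" where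
  "pN A0 A1 lam = (case lam of Fin l \<Rightarrow> A0 + l \<cdot>\<^sub>m A1 | Infty \<Rightarrow> A1)"
definition pE :: "'a::field mat \<Rightarrow> 'a mat \<Rightarrow> 'a ext_pt \<Rightarrow> 'a mat" where
  "pE A0 A1 lam = (case lam of Fin l \<Rightarrow> A1 | Infty \<Rightarrow> A0)"
definition gch :: "'a::field mat \<Rightarrow> 'a mat \<Rightarrow> nat \<Rightarrow> 'a vec list \<Rightarrow> bool" where
  "gch N E r xs = (\<forall>i<length xs. N *\<^sub>v xs!i = (if i = 0 then 0\<^sub>v r else - (E *\<^sub>v xs!(i-1))))"

lemma gch_iff: "xs \<noteq> [] \<Longrightarrow> gch N E r xs \<longleftrightarrow> N *\<^sub>v xs!0 = 0\<^sub>v r \<and>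
   (\<forall>i. 1 \<le> i \<and> i < length xs \<longrightarrow> N *\<^sub>v xs!i = - (E *\<^sub>v xs!(i-1)))"
  unfolding gch_def
proof (intro iffI conjI allI impI)
  fix i assume "xs \<noteq> []" "N *\<^sub>v xs ! 0 = 0\<^sub>v r \<and> (\<forall>i. 1 \<le> i \<and> i < length xs \<longrightarrow> N *\<^sub>v xs ! i = - (E *\<^sub>v xs ! (i - 1)))"
    "i < length xs"
  then show "N *\<^sub>v xs ! i = (if i = 0 then 0\<^sub>v r else - (E *\<^sub>v xs ! (i - 1)))"
    by (cases "i = 0") auto
qed (auto)

lemma pNE_carrier: "A0 \<in> carrier_mat r n \<Longrightarrow> A1 \<in> carrier_mat r n \<Longrightarrow>
  pN A0 A1 lam \<in> carrier_mat r n \<and> pE A0 A1 lam \<in> carrier_mat r n"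
  by (cases lam) (auto simp: pN_def pE_def)

lemma jordan_chain_alt:
  "jordan_chain A0 A1 lam xs \<longleftrightarrow> xs \<noteq> [] \<and> set xs \<subseteq> carrier_vec (dim_col A0) \<and> xs!0 \<noteq> 0\<^sub>v (dim_col A0)
     \<and> gch (pN A0 A1 lam) (pE A0 A1 lam) (dim_row A0) xs"
  by (cases lam) (auto simp: jordan_chain_def gch_iff pN_def pE_def)

lemma span_map_subset:
  fixes f :: "'a::field vec \<Rightarrow> 'a vec"
  assumes S: "S \<subseteq> carrier_vec m" and T: "subspace class_ring T (module_vec TYPE('a) k)"
   and f0: "f (0\<^sub>v m) = 0\<^sub>v k"
   and fadd: "\<And>u w. u \<in> carrier_vec m \<Longrightarrow> w \<in> carrier_vec m \<Longrightarrow> f (u + w) = f u + f w"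
   and fsm: "\<And>c u. u \<in> carrier_vec m \<Longrightarrow> f (c \<cdot>\<^sub>v u) = c \<cdot>\<^sub>v f u"
   and fS: "f ` S \<subseteq> T"
  shows "f ` LinearCombinations.module.span class_ring (module_vec TYPE('a) m) S \<subseteq> T"
proof -
  interpret V: vec_space "TYPE('a)" m .
  note t = subspace_vecD[OF T]
  define P where "P = {u \<in> carrier_vec m. f u \<in> T}"
  have "subspace class_ring P (module_vec TYPE('a) m)"
    by (rule submodule_vecI, auto simp: P_def f0 fadd fsm t)
  then have "submodule class_ring P V.V" unfolding subspace_def by auto
  moreover have "S \<subseteq> P" using S fS unfolding P_def by auto
  ultimately have "V.span S \<subseteq> P" using V.span_is_subset by blast
  then show ?thesis unfolding P_def by auto
qed

lemma jordan_space_subspace: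
  "subspace class_ring (jordan_space l A0 A1 lam) (module_vec TYPE('a::field) (dim_col A0))"
proof -
  interpret V: vec_space "TYPE('a)" "dim_col A0" .
  show ?thesis
  proof (cases "l = 0")
    case True
    then show ?thesis unfolding jordan_space_def by (auto intro!: submodule_vecI)
  next
    case False
    have "{v. \<exists>xs. jordan_chain A0 A1 lam xs \<and> length xs \<le> l \<and> v \<in> set xs} \<subseteq> carrier_vec (dim_col A0)"
      unfolding jordan_chain_def by auto
    from V.span_is_subspace[OF this] False show ?thesis unfolding jordan_space_def by simp
  qed
qed

lemma gch_in_space:
  assumes A0: "A0 \<in> carrier_mat r n" and A1: "A1 \<in> carrier_mat r n"
    and l: "1 \<le> l"
  shows "gch (pN A0 A1 lam) (pE A0 A1 lam) r xs \<Longrightarrow> set xs \<subseteq> carrier_vec n \<Longrightarrow> length xs \<le> l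
    \<Longrightarrow> set xs \<subseteq> jordan_space l A0 A1 lam"
proof (induction xs)
  case Nil
  then show ?case by simp
next
  case (Cons x xs)
  interpret V: vec_space "TYPE('a)" n .
  define G where "G = {v. \<exists>xs. jordan_chain A0 A1 lam xs \<and> length xs \<le> l \<and> v \<in> set xs}"
  have dc: "dim_col A0 = n" "dim_row A0 = r" using A0 by auto
  have js: "jordan_space l A0 A1 lam = V.span G" unfolding jordan_space_def G_def dc using l by simp
  have GC: "G \<subseteq> carrier_vec n" unfolding G_def jordan_chain_def dc by auto
  have sub: "subspace class_ring (jordan_space l A0 A1 lam) (module_vec TYPE('a) n)"
    using jordan_space_subspace[of l A0 A1 lam] dc by simp
  show ?case
  proof (cases "x = 0\<^sub>v n")
    case True
    have "x \<in> jordan_space l A0 A1 lam" using True subspace_vecD(2)[OF sub] by simp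
    moreover have "set xs \<subseteq> jordan_space l A0 A1 lam"
    proof (rule Cons.IH)
      obtain N E where NE: "N = pN A0 A1 lam" "E = pE A0 A1 lam" by auto
      have E: "E \<in> carrier_mat r n" using pNE_carrier[OF A0 A1] NE by auto
      show "gch (pN A0 A1 lam) (pE A0 A1 lam) r xs"
        unfolding gch_def NE[symmetric]
      proof (intro allI impI)
        fix i assume i: "i < length xs"
        have "N *\<^sub>v (x # xs) ! (Suc i) = - (E *\<^sub>v (x # xs) ! i)"
          using Cons.prems(1) i unfolding gch_def NE[symmetric] by (metis Suc_less_eq diff_Suc_1 length_Cons nat.distinct(1))
        then show "N *\<^sub>v xs ! i = (if i = 0 then 0\<^sub>v r else - (E *\<^sub>v xs ! (i - 1)))"
          using True E by (cases i) auto
      qed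
      show "set xs \<subseteq> carrier_vec n" using Cons.prems by auto
      show "length xs \<le> l" using Cons.prems by auto
    qed
    ultimately show ?thesis by auto
  next
    case False
    have "jordan_chain A0 A1 lam (x # xs)" unfolding jordan_chain_alt dc using False Cons.prems by auto
    then have "set (x # xs) \<subseteq> G" unfolding G_def using Cons.prems(3) by blast
    then show ?thesis unfolding js using V.in_own_span[OF GC] by auto
  qed
qed


lemma zz: "0\<^sub>v n + 0\<^sub>v n = (0\<^sub>v n :: 'b::monoid_add vec)"
  by (rule eq_vecI) auto

lemma sz: "(c::'b::semiring_0) \<cdot>\<^sub>v 0\<^sub>v n = 0\<^sub>v n"
  by (rule eq_vecI) auto

lemma mat_vec_zero: "M \<in> carrier_mat r n \<Longrightarrow> M *\<^sub>v 0\<^sub>v n = 0\<^sub>v r"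
  by (rule eq_vecI) auto

lemma gch_zeros: "M \<in> carrier_mat r n \<Longrightarrow> E \<in> carrier_mat r n \<Longrightarrow> gch M E r (map (\<lambda>_. 0\<^sub>v n) xs)"
  unfolding gch_def by (auto simp: mat_vec_zero)

context
  fixes C0 C1 D0 D1 :: "'a::field mat" and p1 q1 p2 q2 :: nat
  assumes C: "C0 \<in> carrier_mat p1 q1" "C1 \<in> carrier_mat p1 q1"
    and D: "D0 \<in> carrier_mat p2 q2" "D1 \<in> carrier_mat p2 q2"
begin

abbreviation "BA0 \<equiv> four_block_mat C0 (0\<^sub>m p1 q2) (0\<^sub>m p2 q1) D0"
abbreviation "BA1 \<equiv> four_block_mat C1 (0\<^sub>m p1 q2) (0\<^sub>m p2 q1) D1"

lemma pN_block: "pN BA0 BA1 lam = four_block_mat (pN C0 C1 lam) (0\<^sub>m p1 q2) (0\<^sub>m p2 q1) (pN D0 D1 lam)"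
proof (cases lam)
  case (Fin l)
  have "l \<cdot>\<^sub>m BA1 = four_block_mat (l \<cdot>\<^sub>m C1) (0\<^sub>m p1 q2) (0\<^sub>m p2 q1) (l \<cdot>\<^sub>m D1)"
    by (subst smult_four_block_mat[OF C(2) _ _ D(2)], auto)
  then show ?thesis using Fin C D
    by (simp add: pN_def, subst add_four_block_mat[of _ p1 q1 _ q2 _ p2], auto)
qed (simp add: pN_def)

lemma pE_block: "pE BA0 BA1 lam = four_block_mat (pE C0 C1 lam) (0\<^sub>m p1 q2) (0\<^sub>m p2 q1) (pE D0 D1 lam)"
  by (cases lam) (auto simp: pE_def)

lemma block_mult:
  assumes "M \<in> carrier_mat p1 q1" "M' \<in> carrier_mat p2 q2" "a \<in> carrier_vec q1" "d \<in> carrier_vec q2"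
  shows "four_block_mat M (0\<^sub>m p1 q2) (0\<^sub>m p2 q1) M' *\<^sub>v (a @\<^sub>v d) = (M *\<^sub>v a) @\<^sub>v (M' *\<^sub>v d)"
  by (subst four_block_mat_mult_vec[OF assms(1) _ _ assms(2) assms(3,4)], insert assms, auto)

lemma block_eq:
  assumes "a \<in> carrier_vec q1" "b \<in> carrier_vec q1" "d \<in> carrier_vec q2" "e \<in> carrier_vec q2"
  shows "(pN BA0 BA1 lam *\<^sub>v (a @\<^sub>v d) = (if z then 0\<^sub>v (p1+p2) else - (pE BA0 BA1 lam *\<^sub>v (b @\<^sub>v e)))) \<longleftrightarrow>
     (pN C0 C1 lam *\<^sub>v a = (if z then 0\<^sub>v p1 else - (pE C0 C1 lam *\<^sub>v b))) \<and>
     (pN D0 D1 lam *\<^sub>v d = (if z then 0\<^sub>v p2 else - (pE D0 D1 lam *\<^sub>v e)))"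
proof -
  note cc = pNE_carrier[OF C, of lam] pNE_carrier[OF D, of lam]
  have 1: "pN BA0 BA1 lam *\<^sub>v (a @\<^sub>v d) = (pN C0 C1 lam *\<^sub>v a) @\<^sub>v (pN D0 D1 lam *\<^sub>v d)"
    unfolding pN_block using cc assms by (intro block_mult) auto
  have 2: "pE BA0 BA1 lam *\<^sub>v (b @\<^sub>v e) = (pE C0 C1 lam *\<^sub>v b) @\<^sub>v (pE D0 D1 lam *\<^sub>v e)"
    unfolding pE_block using cc assms by (intro block_mult) auto
  have c1: "pN C0 C1 lam *\<^sub>v a \<in> carrier_vec p1" using cc assms by (auto intro: mult_mat_vec_carrier)
  show ?thesis
  proof (cases z)
    case True
    then show ?thesis unfolding 1 using append_vec_eq[OF c1, of "0\<^sub>v p1"]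
      by (simp add: zero_append_vec[symmetric])
  next
    case False
    have c2: "- (pE C0 C1 lam *\<^sub>v b) \<in> carrier_vec p1" using cc assms by (auto intro: mult_mat_vec_carrier)
    show ?thesis using False unfolding 1 2 neg_append_vec using append_vec_eq[OF c1 c2] by simp
  qed
qed

lemma gch_block:
  assumes xs: "set xs \<subseteq> carrier_vec (q1+q2)"
  shows "gch (pN BA0 BA1 lam) (pE BA0 BA1 lam) (p1+p2) xs \<longleftrightarrow>
    gch (pN C0 C1 lam) (pE C0 C1 lam) p1 (map (\<lambda>x. vec_first x q1) xs) \<and>
    gch (pN D0 D1 lam) (pE D0 D1 lam) p2 (map (\<lambda>x. vec_last x q2) xs)"
proof -
  have "(pN BA0 BA1 lam *\<^sub>v xs!i = (if i = 0 then 0\<^sub>v (p1+p2) else - (pE BA0 BA1 lam *\<^sub>v xs!(i-1)))) \<longleftrightarrow>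
     (pN C0 C1 lam *\<^sub>v vec_first (xs!i) q1 = (if i = 0 then 0\<^sub>v p1 else - (pE C0 C1 lam *\<^sub>v vec_first (xs!(i-1)) q1))) \<and>
     (pN D0 D1 lam *\<^sub>v vec_last (xs!i) q2 = (if i = 0 then 0\<^sub>v p2 else - (pE D0 D1 lam *\<^sub>v vec_last (xs!(i-1)) q2)))"
    if i: "i < length xs" for i
  proof -
    have x1: "xs!i \<in> carrier_vec (q1+q2)" "xs!(i-1) \<in> carrier_vec (q1+q2)" using i xs by auto
    show ?thesis
      using block_eq[of "vec_first (xs!i) q1" "vec_first (xs!(i-1)) q1" "vec_last (xs!i) q2" "vec_last (xs!(i-1)) q2" lam "i = 0"]
      unfolding vec_first_last_append[OF x1(1)] vec_first_last_append[OF x1(2)] by simp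
  qed
  then show ?thesis unfolding gch_def by auto
qed


lemma block_space: "jordan_space l BA0 BA1 lam = prodsp q1 (jordan_space l C0 C1 lam) (jordan_space l D0 D1 lam)"
proof (cases "l = 0")
  case True
  have dc: "dim_col BA0 = q1 + q2" using C D by auto
  show ?thesis unfolding jordan_space_def using True C D unfolding dc prodsp_def
    by (auto simp: zero_append_vec)
next
  case False
  then have l: "1 \<le> l" by simp
  interpret V: vec_space "TYPE('a)" "q1+q2" .
  have dc: "dim_col BA0 = q1 + q2" "dim_row BA0 = p1 + p2" "dim_col C0 = q1" "dim_row C0 = p1"
    "dim_col D0 = q2" "dim_row D0 = p2" using C D by auto
  have BA: "BA0 \<in> carrier_mat (p1+p2) (q1+q2)" "BA1 \<in> carrier_mat (p1+p2) (q1+q2)" using C D by auto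
  define GA where "GA = {v. \<exists>xs. jordan_chain BA0 BA1 lam xs \<and> length xs \<le> l \<and> v \<in> set xs}"
  define GC where "GC = {v. \<exists>xs. jordan_chain C0 C1 lam xs \<and> length xs \<le> l \<and> v \<in> set xs}"
  define GD where "GD = {v. \<exists>xs. jordan_chain D0 D1 lam xs \<and> length xs \<le> l \<and> v \<in> set xs}"
  define LC where "LC = jordan_space l C0 C1 lam"
  define LD where "LD = jordan_space l D0 D1 lam"
  define LA where "LA = jordan_space l BA0 BA1 lam"
  have js: "LA = V.span GA" unfolding LA_def jordan_space_def GA_def dc using False by simp
  have jsC: "LC = LinearCombinations.module.span class_ring (module_vec TYPE('a) q1) GC"
    unfolding LC_def jordan_space_def GC_def dc using False by simp
  have jsD: "LD = LinearCombinations.module.span class_ring (module_vec TYPE('a) q2) GD"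
    unfolding LD_def jordan_space_def GD_def dc using False by simp
  have GAc: "GA \<subseteq> carrier_vec (q1+q2)" unfolding GA_def jordan_chain_def dc by auto
  have GCc: "GC \<subseteq> carrier_vec q1" unfolding GC_def jordan_chain_def dc by auto
  have GDc: "GD \<subseteq> carrier_vec q2" unfolding GD_def jordan_chain_def dc by auto
  have subC: "subspace class_ring LC (module_vec TYPE('a) q1)"
    using jordan_space_subspace[of l C0 C1 lam] unfolding LC_def dc .
  have subD: "subspace class_ring LD (module_vec TYPE('a) q2)"
    using jordan_space_subspace[of l D0 D1 lam] unfolding LD_def dc .
  have subA: "subspace class_ring LA (module_vec TYPE('a) (q1+q2))"
    using jordan_space_subspace[of l BA0 BA1 lam] unfolding LA_def dc .
  note sA = subspace_vecD[OF subA] and sC = subspace_vecD[OF subC] and sD = subspace_vecD[OF subD]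
  have subP: "subspace class_ring (prodsp q1 LC LD) (module_vec TYPE('a) (q1+q2))"
    by (rule prodsp_subspace[OF subC subD])
  have "LA \<subseteq> prodsp q1 LC LD"
    unfolding js
  proof (rule V.span_is_subset)
    show "submodule class_ring (prodsp q1 LC LD) V.V" using subP unfolding subspace_def by auto
    show "GA \<subseteq> prodsp q1 LC LD"
    proof
      fix v assume "v \<in> GA"
      then obtain xs where xs: "jordan_chain BA0 BA1 lam xs" "length xs \<le> l" "v \<in> set xs"
        unfolding GA_def by auto
      have xc: "set xs \<subseteq> carrier_vec (q1+q2)" and g: "gch (pN BA0 BA1 lam) (pE BA0 BA1 lam) (p1+p2) xs"
        using xs(1) unfolding jordan_chain_alt dc by auto
      from g have g1: "gch (pN C0 C1 lam) (pE C0 C1 lam) p1 (map (\<lambda>x. vec_first x q1) xs)"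
        and g2: "gch (pN D0 D1 lam) (pE D0 D1 lam) p2 (map (\<lambda>x. vec_last x q2) xs)"
        using gch_block[OF xc] by auto
      have "set (map (\<lambda>x. vec_first x q1) xs) \<subseteq> LC" unfolding LC_def
        by (rule gch_in_space[OF C l g1], auto simp: xs(2))
      then have 1: "vec_first v q1 \<in> LC" using xs(3) by auto
      have "set (map (\<lambda>x. vec_last x q2) xs) \<subseteq> LD" unfolding LD_def
        by (rule gch_in_space[OF D l g2], auto simp: xs(2))
      then have 2: "vec_last v q2 \<in> LD" using xs(3) by auto
      have "v = vec_first v q1 @\<^sub>v vec_last v q2" using xc xs(3) by auto
      then show "v \<in> prodsp q1 LC LD" unfolding prodsp_def using 1 2 by blast
    qed
  qed
  moreover have "prodsp q1 LC LD \<subseteq> LA"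
  proof
    fix z assume "z \<in> prodsp q1 LC LD"
    then obtain u w where z: "z = u @\<^sub>v w" "u \<in> LC" "w \<in> LD" unfolding prodsp_def by auto
    have uc: "u \<in> carrier_vec q1" and wc: "w \<in> carrier_vec q2" using z sC sD by auto
    have "(\<lambda>u. u @\<^sub>v 0\<^sub>v q2) ` LC \<subseteq> LA" unfolding jsC
    proof (rule span_map_subset[OF GCc subA])
      show "0\<^sub>v q1 @\<^sub>v 0\<^sub>v q2 = 0\<^sub>v (q1 + q2)" by (rule zero_append_vec)
      show "(u + w) @\<^sub>v 0\<^sub>v q2 = (u @\<^sub>v 0\<^sub>v q2) + (w @\<^sub>v 0\<^sub>v q2)"
        if "u \<in> carrier_vec q1" "w \<in> carrier_vec q1" for u w :: "'a vec"
        using append_vec_add[OF that zero_carrier_vec zero_carrier_vec, of q2] unfolding zz by simp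
      show "(c \<cdot>\<^sub>v u) @\<^sub>v 0\<^sub>v q2 = c \<cdot>\<^sub>v (u @\<^sub>v 0\<^sub>v q2)" for c :: 'a and u :: "'a vec"
        by (simp add: smult_append_vec sz)
      show "(\<lambda>u. u @\<^sub>v 0\<^sub>v q2) ` GC \<subseteq> LA"
      proof
        fix y assume "y \<in> (\<lambda>u. u @\<^sub>v 0\<^sub>v q2) ` GC"
        then obtain v xs where v: "y = v @\<^sub>v 0\<^sub>v q2" "jordan_chain C0 C1 lam xs" "length xs \<le> l" "v \<in> set xs"
          unfolding GC_def by auto
        define ys where "ys = map (\<lambda>u. u @\<^sub>v 0\<^sub>v q2) xs"
        have xc: "set xs \<subseteq> carrier_vec q1" "xs \<noteq> []" "xs ! 0 \<noteq> 0\<^sub>v q1"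
          and g: "gch (pN C0 C1 lam) (pE C0 C1 lam) p1 xs"
          using v(2) unfolding jordan_chain_alt dc by auto
        have yc: "set ys \<subseteq> carrier_vec (q1+q2)" using xc unfolding ys_def by auto
        have m1: "map (\<lambda>x. vec_first x q1) ys = xs" unfolding ys_def using xc(1)
          by (induct xs) (auto simp: vec_first_append)
        have m2: "map (\<lambda>x. vec_last x q2) ys = map (\<lambda>_. 0\<^sub>v q2) xs" unfolding ys_def
          by (auto simp: vec_last_append)
        have "gch (pN BA0 BA1 lam) (pE BA0 BA1 lam) (p1+p2) ys"
          unfolding gch_block[OF yc] m1 m2 using g gch_zeros pNE_carrier[OF D] by blast
        moreover have "ys ! 0 \<noteq> 0\<^sub>v (q1+q2)"
        proof
          assume "ys ! 0 = 0\<^sub>v (q1+q2)"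
          then have "xs ! 0 @\<^sub>v 0\<^sub>v q2 = 0\<^sub>v q1 @\<^sub>v 0\<^sub>v q2" unfolding ys_def using xc(2)
            by (simp add: zero_append_vec)
          moreover have "xs ! 0 \<in> carrier_vec q1" using xc(1,2) by auto
          ultimately show False using xc append_vec_eq[of "xs ! 0" q1 "0\<^sub>v q1"] by auto
        qed
        ultimately have "jordan_chain BA0 BA1 lam ys" unfolding jordan_chain_alt dc using yc xc(2) ys_def by auto
        moreover have "y \<in> set ys" unfolding ys_def using v by auto
        ultimately have "y \<in> GA" unfolding GA_def ys_def using v(3) by auto
        then show "y \<in> LA" unfolding js using V.in_own_span[OF GAc] by auto
      qed
    qed
    then have u0: "u @\<^sub>v 0\<^sub>v q2 \<in> LA" using z by auto
    have "(\<lambda>w. 0\<^sub>v q1 @\<^sub>v w) ` LD \<subseteq> LA" unfolding jsD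
    proof (rule span_map_subset[OF GDc subA])
      show "0\<^sub>v q1 @\<^sub>v 0\<^sub>v q2 = 0\<^sub>v (q1 + q2)" by (rule zero_append_vec)
      show "0\<^sub>v q1 @\<^sub>v (u + w) = (0\<^sub>v q1 @\<^sub>v u) + (0\<^sub>v q1 @\<^sub>v w)"
        if "u \<in> carrier_vec q2" "w \<in> carrier_vec q2" for u w :: "'a vec"
        using append_vec_add[OF zero_carrier_vec zero_carrier_vec that, of q1] unfolding zz by simp
      show "0\<^sub>v q1 @\<^sub>v (c \<cdot>\<^sub>v u) = c \<cdot>\<^sub>v (0\<^sub>v q1 @\<^sub>v u)" for c :: 'a and u :: "'a vec"
        by (simp add: smult_append_vec sz)
      show "(\<lambda>w. 0\<^sub>v q1 @\<^sub>v w) ` GD \<subseteq> LA"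
      proof
        fix y assume "y \<in> (\<lambda>w. 0\<^sub>v q1 @\<^sub>v w) ` GD"
        then obtain v xs where v: "y = 0\<^sub>v q1 @\<^sub>v v" "jordan_chain D0 D1 lam xs" "length xs \<le> l" "v \<in> set xs"
          unfolding GD_def by auto
        define ys where "ys = map (\<lambda>w. 0\<^sub>v q1 @\<^sub>v w) xs"
        have xc: "set xs \<subseteq> carrier_vec q2" "xs \<noteq> []" "xs ! 0 \<noteq> 0\<^sub>v q2"
          and g: "gch (pN D0 D1 lam) (pE D0 D1 lam) p2 xs"
          using v(2) unfolding jordan_chain_alt dc by auto
        have yc: "set ys \<subseteq> carrier_vec (q1+q2)" using xc unfolding ys_def by auto
        have m1: "map (\<lambda>x. vec_first x q1) ys = map (\<lambda>_. 0\<^sub>v q1) xs" unfolding ys_def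
          by (auto simp: vec_first_append)
        have m2: "map (\<lambda>x. vec_last x q2) ys = xs" unfolding ys_def using xc(1)
          by (induct xs) (auto simp: vec_last_append)
        have "gch (pN BA0 BA1 lam) (pE BA0 BA1 lam) (p1+p2) ys"
          unfolding gch_block[OF yc] m1 m2 using g gch_zeros pNE_carrier[OF C] by blast
        moreover have "ys ! 0 \<noteq> 0\<^sub>v (q1+q2)"
        proof
          assume "ys ! 0 = 0\<^sub>v (q1+q2)"
          then have "0\<^sub>v q1 @\<^sub>v xs ! 0 = 0\<^sub>v q1 @\<^sub>v 0\<^sub>v q2" unfolding ys_def using xc(2)
            by (simp add: zero_append_vec)
          then show False using xc append_vec_eq[of "0\<^sub>v q1" q1 "0\<^sub>v q1"] by auto
        qed
        ultimately have "jordan_chain BA0 BA1 lam ys" unfolding jordan_chain_alt dc using yc xc(2) ys_def by auto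
        moreover have "y \<in> set ys" unfolding ys_def using v by auto
        ultimately have "y \<in> GA" unfolding GA_def ys_def using v(3) by auto
        then show "y \<in> LA" unfolding js using V.in_own_span[OF GAc] by auto
      qed
    qed
    then have w0: "0\<^sub>v q1 @\<^sub>v w \<in> LA" using z by auto
    have "z = (u @\<^sub>v 0\<^sub>v q2) + (0\<^sub>v q1 @\<^sub>v w)"
      unfolding z(1) using append_vec_add[OF uc zero_carrier_vec zero_carrier_vec wc] uc wc by simp
    then show "z \<in> LA" using sA(3)[OF u0 w0] by simp
  qed
  ultimately show ?thesis unfolding LA_def LC_def LD_def by auto
qed

end

lemma zero_pencil_space:
  assumes l: "1 \<le> l"
  shows "jordan_space l (0\<^sub>m 0 q) (0\<^sub>m 0 q) lam = carrier_vec q"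
proof
  have sub: "subspace class_ring (jordan_space l (0\<^sub>m 0 q) (0\<^sub>m 0 q) lam) (module_vec TYPE('a::field) q)"
    using jordan_space_subspace[of l "0\<^sub>m 0 q" "0\<^sub>m 0 q" lam] by simp
  show "jordan_space l (0\<^sub>m 0 q) (0\<^sub>m 0 q) lam \<subseteq> carrier_vec q" using subspace_vecD(1)[OF sub] .
  show "carrier_vec q \<subseteq> jordan_space l (0\<^sub>m 0 q) (0\<^sub>m 0 q) lam"
  proof
    fix v :: "'a vec" assume v: "v \<in> carrier_vec q"
    show "v \<in> jordan_space l (0\<^sub>m 0 q) (0\<^sub>m 0 q) lam"
    proof (cases "v = 0\<^sub>v q")
      case True
      then show ?thesis using subspace_vecD(2)[OF sub] by simp
    next
      case False
      interpret V: vec_space "TYPE('a)" q .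
      define G where "G = {v. \<exists>xs. jordan_chain (0\<^sub>m 0 q) (0\<^sub>m 0 q :: 'a mat) lam xs \<and> length xs \<le> l \<and> v \<in> set xs}"
      have js: "jordan_space l (0\<^sub>m 0 q) (0\<^sub>m 0 q) lam = V.span G"
        unfolding jordan_space_def G_def using l by simp
      have GC: "G \<subseteq> carrier_vec q" unfolding G_def jordan_chain_def by auto
      have cc: "pN (0\<^sub>m 0 q) (0\<^sub>m 0 q) lam \<in> carrier_mat 0 q"
        using pNE_carrier[of "0\<^sub>m 0 q" 0 q "0\<^sub>m 0 q :: 'a mat" lam] by auto
      have "gch (pN (0\<^sub>m 0 q) (0\<^sub>m 0 q) lam) (pE (0\<^sub>m 0 q) (0\<^sub>m 0 q) lam) 0 [v]"
        unfolding gch_def using cc by auto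
      then have "jordan_chain (0\<^sub>m 0 q) (0\<^sub>m 0 q :: 'a mat) lam [v]"
        unfolding jordan_chain_alt using v False by auto
      then have "v \<in> G" unfolding G_def using l by force
      then show ?thesis unfolding js using V.in_own_span[OF GC] by auto
    qed
  qed
qed

lemma dim_carrier: "subspace_dim q (carrier_vec q :: 'a::field vec set) = q"
proof -
  interpret V: vec_space "TYPE('a)" q .
  have "(module_vec TYPE('a) q)\<lparr>carrier := carrier_vec q\<rparr> = module_vec TYPE('a) q"
    by (simp add: module_vec_def)
  then show ?thesis unfolding subspace_dim_def by (simp only:) (rule V.dim_is_n)
qed

lemma append_vNil': "u @\<^sub>v vNil = u"
  by (rule eq_vecI) (auto simp: append_vec_def Let_def)

lemma js_sub: "A0 \<in> carrier_mat p q \<Longrightarrow> subspace class_ring (jordan_space l A0 A1 lam) (module_vec TYPE('a::field) q)"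
  using jordan_space_subspace[of l A0 A1 lam] by auto

lemma part1:
  fixes C0 C1 D0 D1 :: "'a::field mat"
  assumes "C0 \<in> carrier_mat p1 q1" "C1 \<in> carrier_mat p1 q1" "D0 \<in> carrier_mat p2 q2" "D1 \<in> carrier_mat p2 q2"
  shows "subspace_dim (q1 + q2)
             (jordan_space i (four_block_mat C0 (0\<^sub>m p1 q2) (0\<^sub>m p2 q1) D0)
                             (four_block_mat C1 (0\<^sub>m p1 q2) (0\<^sub>m p2 q1) D1) lam)
           = subspace_dim q1 (jordan_space i C0 C1 lam)
             + subspace_dim q2 (jordan_space i D0 D1 lam)"
  unfolding block_space[OF assms]
  by (rule dim_prodsp[OF js_sub[OF assms(1)] js_sub[OF assms(3)]])

lemma part2:
  fixes C0 C1 :: "'a::field mat"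
  assumes "C0 \<in> carrier_mat p q1" "C1 \<in> carrier_mat p q1" "1 \<le> i"
  shows "subspace_dim (q1 + q2)
             (jordan_space i (four_block_mat C0 (0\<^sub>m p q2) (0\<^sub>m 0 q1) (0\<^sub>m 0 q2))
                             (four_block_mat C1 (0\<^sub>m p q2) (0\<^sub>m 0 q1) (0\<^sub>m 0 q2)) lam)
           = subspace_dim q1 (jordan_space i C0 C1 lam) + q2"
proof -
  have z: "(0\<^sub>m 0 q2 :: 'a mat) \<in> carrier_mat 0 q2" by simp
  have s2: "subspace class_ring (carrier_vec q2) (module_vec TYPE('a) q2)"
    by (rule submodule_vecI) auto
  show ?thesis
    unfolding block_space[OF assms(1,2) z z] zero_pencil_space[OF assms(3)]
    using dim_prodsp[OF js_sub[OF assms(1)] s2] dim_carrier by simp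
qed

lemma part3:
  fixes C0 C1 :: "'a::field mat"
  assumes c: "C0 \<in> carrier_mat p1 q" "C1 \<in> carrier_mat p1 q"
  shows "subspace_dim q (jordan_space i (C0 @\<^sub>r 0\<^sub>m p2 q) (C1 @\<^sub>r 0\<^sub>m p2 q) lam)
           = subspace_dim q (jordan_space i C0 C1 lam)"
proof -
  have r: "C0 @\<^sub>r 0\<^sub>m p2 q = four_block_mat C0 (0\<^sub>m p1 0) (0\<^sub>m p2 q) (0\<^sub>m p2 0)"
    "C1 @\<^sub>r 0\<^sub>m p2 q = four_block_mat C1 (0\<^sub>m p1 0) (0\<^sub>m p2 q) (0\<^sub>m p2 0)"
    using c unfolding append_rows_def by auto
  have z: "(0\<^sub>m p2 0 :: 'a mat) \<in> carrier_mat p2 0" by simp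
  have eq: "jordan_space i (C0 @\<^sub>r 0\<^sub>m p2 q) (C1 @\<^sub>r 0\<^sub>m p2 q) lam =
     prodsp q (jordan_space i C0 C1 lam) (jordan_space i (0\<^sub>m p2 0) (0\<^sub>m p2 0) lam)"
    unfolding r using block_space[OF c z z] by simp
  have sD: "subspace class_ring (jordan_space i (0\<^sub>m p2 0) (0\<^sub>m p2 0 :: 'a mat) lam) (module_vec TYPE('a) 0)"
    by (rule js_sub[of _ p2]) simp
  note d = subspace_vecD[OF sD]
  have D0: "jordan_space i (0\<^sub>m p2 0) (0\<^sub>m p2 0 :: 'a mat) lam = {0\<^sub>v 0}"
  proof
    show "jordan_space i (0\<^sub>m p2 0) (0\<^sub>m p2 0) lam \<subseteq> {0\<^sub>v 0}"
    proof
      fix x assume "x \<in> jordan_space i (0\<^sub>m p2 0) (0\<^sub>m p2 0 :: 'a mat) lam"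
      then have "x \<in> carrier_vec 0" using d(1) by blast
      then have "dim_vec x = 0" by (rule carrier_vecD)
      then show "x \<in> {0\<^sub>v 0}" by simp
    qed
    show "{0\<^sub>v 0} \<subseteq> jordan_space i (0\<^sub>m p2 0) (0\<^sub>m p2 0 :: 'a mat) lam" using d(2) by auto
  qed
  have "prodsp q (jordan_space i C0 C1 lam) {0\<^sub>v 0} = jordan_space i C0 C1 lam"
    unfolding prodsp_def by (auto simp: append_vNil')
  then show ?thesis unfolding eq D0 by simp
qed

theorem proposition3p6:
  fixes lam :: "'a::alg_closed_field ext_pt"
  shows
  "(\<forall>p1 q1 p2 q2 (C0::'a mat) C1 D0 D1.
      C0 \<in> carrier_mat p1 q1 \<longrightarrow> C1 \<in> carrier_mat p1 q1 \<longrightarrow>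
      D0 \<in> carrier_mat p2 q2 \<longrightarrow> D1 \<in> carrier_mat p2 q2 \<longrightarrow>
      (\<forall>i. subspace_dim (q1 + q2)
             (jordan_space i (four_block_mat C0 (0\<^sub>m p1 q2) (0\<^sub>m p2 q1) D0)
                             (four_block_mat C1 (0\<^sub>m p1 q2) (0\<^sub>m p2 q1) D1) lam)
           = subspace_dim q1 (jordan_space i C0 C1 lam)
             + subspace_dim q2 (jordan_space i D0 D1 lam)))
   \<and>
   (\<forall>p q1 q2 (C0::'a mat) C1.
      C0 \<in> carrier_mat p q1 \<longrightarrow> C1 \<in> carrier_mat p q1 \<longrightarrow>
      (\<forall>i\<ge>1. subspace_dim (q1 + q2)
             (jordan_space i (four_block_mat C0 (0\<^sub>m p q2) (0\<^sub>m 0 q1) (0\<^sub>m 0 q2))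
                             (four_block_mat C1 (0\<^sub>m p q2) (0\<^sub>m 0 q1) (0\<^sub>m 0 q2)) lam)
           = subspace_dim q1 (jordan_space i C0 C1 lam) + q2))
   \<and>
   (\<forall>p1 p2 q (C0::'a mat) C1.
      C0 \<in> carrier_mat p1 q \<longrightarrow> C1 \<in> carrier_mat p1 q \<longrightarrow>
      (\<forall>i. subspace_dim q
             (jordan_space i (C0 @\<^sub>r 0\<^sub>m p2 q) (C1 @\<^sub>r 0\<^sub>m p2 q) lam)
           = subspace_dim q (jordan_space i C0 C1 lam)))"
proof (intro conjI allI impI)
  fix p1 q1 p2 q2 i :: nat and C0 C1 D0 D1 :: "'a mat"
  assume "C0 \<in> carrier_mat p1 q1" "C1 \<in> carrier_mat p1 q1" "D0 \<in> carrier_mat p2 q2" "D1 \<in> carrier_mat p2 q2"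
  then show "subspace_dim (q1 + q2)
             (jordan_space i (four_block_mat C0 (0\<^sub>m p1 q2) (0\<^sub>m p2 q1) D0)
                             (four_block_mat C1 (0\<^sub>m p1 q2) (0\<^sub>m p2 q1) D1) lam)
           = subspace_dim q1 (jordan_space i C0 C1 lam)
             + subspace_dim q2 (jordan_space i D0 D1 lam)" by (rule part1)
next
  fix p q1 q2 i :: nat and C0 C1 :: "'a mat"
  assume "C0 \<in> carrier_mat p q1" "C1 \<in> carrier_mat p q1" "1 \<le> i"
  then show "subspace_dim (q1 + q2)
             (jordan_space i (four_block_mat C0 (0\<^sub>m p q2) (0\<^sub>m 0 q1) (0\<^sub>m 0 q2))
                             (four_block_mat C1 (0\<^sub>m p q2) (0\<^sub>m 0 q1) (0\<^sub>m 0 q2)) lam)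
           = subspace_dim q1 (jordan_space i C0 C1 lam) + q2" by (rule part2)
next
  fix p1 p2 q i :: nat and C0 C1 :: "'a mat"
  assume "C0 \<in> carrier_mat p1 q" "C1 \<in> carrier_mat p1 q"
  then show "subspace_dim q
             (jordan_space i (C0 @\<^sub>r 0\<^sub>m p2 q) (C1 @\<^sub>r 0\<^sub>m p2 q) lam)
           = subspace_dim q (jordan_space i C0 C1 lam)" by (rule part3)
qed

end
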